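(* Let $d,r$ be positive integers, $n=dr$, and let $\gamma\in\mathcal S_n$ have cycle structure $d^r$. Suppose $(\varepsilon,\varepsilon,\gamma;(123))\in\mathrm{Par}(n)$. Then: <ul> <li>(i) if $3\mid d$ then $3\mid r$;</li> <li>(ii) if $6\mid d$ then $6\mid r$.</li> </ul>
   Context: A Latin square of order $n$ is an $n\times n$ array with rows, columns and symbols indexed by $[n]$, each symbol occurring once in each row and each column, with triple set $O(L)$. Permutations act on the right; $\varepsilon$ is the identity. A paratopism $(\alpha,\beta,\gamma;(123))$ maps $L$ to $L^\sigma$ with triple set $\{(z\gamma,x\alpha,y\beta):(x,y,z)\in O(L)\}$; it is an autoparatopism of $L$ if $L^\sigma=L$. $\mathrm{Par}(n)$ is the set of paratopisms that are autoparatopisms of at least one Latin square of order $n$. *)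

theory Defs
  imports "HOL-Combinatorics.Combinatorics"
begin

(* A Latin square of order n is represented by its triple set
   O(L) \<subseteq> [n]^3: each (row, column) cell holds exactly one symbol, each symbol
   occurs exactly once in each row and exactly once in each column. *)
definition latin_square :: "nat \<Rightarrow> (nat \<times> nat \<times> nat) set \<Rightarrow> bool" where
  "latin_square n T \<longleftrightarrow>
     T \<subseteq> {1..n} \<times> {1..n} \<times> {1..n} \<and>
     (\<forall>x\<in>{1..n}. \<forall>y\<in>{1..n}. \<exists>!z. (x, y, z) \<in> T) \<and>
     (\<forall>x\<in>{1..n}. \<forall>z\<in>{1..n}. \<exists>!y. (x, y, z) \<in> T) \<and>
     (\<forall>y\<in>{1..n}. \<forall>z\<in>{1..n}. \<exists>!x. (x, y, z) \<in> T)"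

(* L^\<sigma> for \<sigma> = (\<alpha>,\<beta>,\<gamma>;(123)): triples (z\<gamma>, x\<alpha>, y\<beta>); right action x\<alpha> = \<alpha> x *)
definition para_123 ::
  "(nat \<Rightarrow> nat) \<Rightarrow> (nat \<Rightarrow> nat) \<Rightarrow> (nat \<Rightarrow> nat) \<Rightarrow> (nat \<times> nat \<times> nat) set \<Rightarrow> (nat \<times> nat \<times> nat) set" where
  "para_123 \<alpha> \<beta> \<gamma> T = {(\<gamma> z, \<alpha> x, \<beta> y) | x y z. (x, y, z) \<in> T}"

definition in_Par_123 :: "nat \<Rightarrow> (nat \<Rightarrow> nat) \<Rightarrow> (nat \<Rightarrow> nat) \<Rightarrow> (nat \<Rightarrow> nat) \<Rightarrow> bool" where
  "in_Par_123 n \<alpha> \<beta> \<gamma> \<longleftrightarrow>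
     \<alpha> permutes {1..n} \<and> \<beta> permutes {1..n} \<and> \<gamma> permutes {1..n} \<and>
     (\<exists>T. latin_square n T \<and> para_123 \<alpha> \<beta> \<gamma> T = T)"

definition cycle_len :: "(nat \<Rightarrow> nat) \<Rightarrow> nat \<Rightarrow> nat" where
  "cycle_len \<gamma> x = (LEAST k. 0 < k \<and> (\<gamma> ^^ k) x = x)"

definition cycle_structure :: "nat \<Rightarrow> (nat \<Rightarrow> nat) \<Rightarrow> nat \<Rightarrow> nat \<Rightarrow> bool" where
  "cycle_structure n \<gamma> d r \<longleftrightarrow>
     \<gamma> permutes {1..n} \<and> d * r = n \<and> (\<forall>x\<in>{1..n}. cycle_len \<gamma> x = d)"

end

theory Submission
  imports Defs
begin


locale ctx5 =
  fixes n d :: nat and g :: "nat \<Rightarrow> nat" and L :: "(nat \<times> nat \<times> nat) set"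
  assumes perm: "g permutes {1..n}"
    and dpos: "0 < d"
    and clen: "\<forall>x\<in>{1..n}. cycle_len g x = d"
    and lat: "latin_square n L"
    and clos: "\<And>x y z. (x,y,z) \<in> L \<Longrightarrow> (g z, x, y) \<in> L"
begin

lemma pow_in: "x \<in> {1..n} \<Longrightarrow> (g ^^ k) x \<in> {1..n}"
  using permutes_in_funpow_image[OF perm] by blast

lemma pow_d: assumes "x \<in> {1..n}" shows "(g ^^ d) x = x"
proof -
  have "permutation g" using perm permutes_imp_permutation by blast
  then obtain k where "k > 0" "(g ^^ k) x = x" by (rule permutation_self)
  then have "0 < d \<and> (g ^^ d) x = x"
    using LeastI[of "\<lambda>k. 0 < k \<and> (g ^^ k) x = x" k] clen assms
    unfolding cycle_len_def by auto
  then show ?thesis by simp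
qed

lemma pow_mult: "x \<in> {1..n} \<Longrightarrow> (g ^^ (d * q)) x = x"
proof (induction q)
  case 0 then show ?case by simp
next
  case (Suc q)
  have "(g ^^ (d * Suc q)) x = (g ^^ d) ((g ^^ (d * q)) x)"
    by (simp add: funpow_add)
  then show ?case using Suc pow_d by simp
qed

lemma pow_mod: "x \<in> {1..n} \<Longrightarrow> (g ^^ k) x = (g ^^ (k mod d)) x"
proof -
  assume x: "x \<in> {1..n}"
  have "k = k mod d + d * (k div d)" by simp
  then have "(g ^^ k) x = (g ^^ (k mod d)) ((g ^^ (d * (k div d))) x)"
    by (metis funpow_add o_apply)
  then show ?thesis using pow_mult[OF x] by simp
qed

lemma pow_self_dvd: assumes x: "x \<in> {1..n}" and e: "(g ^^ k) x = x" shows "d dvd k"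
proof (rule ccontr)
  assume "\<not> d dvd k"
  then have "0 < k mod d" "k mod d < d" using dpos by (auto simp: mod_greater_zero_iff_not_dvd)
  moreover have "(g ^^ (k mod d)) x = x" using pow_mod[OF x, of k] e by simp
  ultimately show False
    using not_less_Least[of "k mod d" "\<lambda>k. 0 < k \<and> (g ^^ k) x = x"] clen x
    unfolding cycle_len_def by auto
qed

definition sh :: "int \<Rightarrow> nat \<Rightarrow> nat" where
  "sh a x = (g ^^ nat (a mod int d)) x"

lemma sh_in: "x \<in> {1..n} \<Longrightarrow> sh a x \<in> {1..n}"
  unfolding sh_def by (rule pow_in)

lemma sh_cong: "a mod int d = b mod int d \<Longrightarrow> sh a x = sh b x"
  unfolding sh_def by simp

lemma sh_add: assumes x: "x \<in> {1..n}" shows "sh a (sh b x) = sh (a + b) x"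
proof -
  have "sh a (sh b x) = (g ^^ (nat (a mod int d) + nat (b mod int d))) x"
    unfolding sh_def by (simp add: funpow_add)
  also have "\<dots> = (g ^^ ((nat (a mod int d) + nat (b mod int d)) mod d)) x"
    by (rule pow_mod[OF x])
  also have "(nat (a mod int d) + nat (b mod int d)) mod d = nat ((a + b) mod int d)"
  proof -
    have A: "0 \<le> a mod int d" "0 \<le> b mod int d" using dpos by simp_all
    have "int ((nat (a mod int d) + nat (b mod int d)) mod d) = (a mod int d + b mod int d) mod int d"
      using A by (simp add: zmod_int)
    also have "\<dots> = (a + b) mod int d" by (simp add: mod_add_eq)
    finally show ?thesis by (metis nat_int)
  qed
  finally show ?thesis unfolding sh_def .
qed

lemma sh0: "sh 0 x = x" unfolding sh_def by simp

lemma sh1: assumes x: "x \<in> {1..n}" shows "sh 1 x = g x"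
proof -
  have "g x = (g ^^ 1) x" by simp
  also have "\<dots> = (g ^^ (1 mod d)) x" by (rule pow_mod[OF x])
  finally show ?thesis unfolding sh_def using dpos
    by (metis nat_int of_nat_1 zmod_int)
qed

lemma sh_zero: "a mod int d = 0 \<Longrightarrow> sh a x = x"
  unfolding sh_def by simp

lemma pow_eq: assumes x: "x \<in> {1..n}" and e: "(g ^^ a) x = (g ^^ b) x"
  shows "int a mod int d = int b mod int d"
proof -
  define c where "c = d * (a + 1) - a"
  have "1 * (a + 1) \<le> d * (a + 1)" using dpos by (intro mult_le_mono1) simp
  then have le: "a \<le> d * (a + 1)" by simp
  have "int c = int (d * (a + 1)) - int a" unfolding c_def by (rule of_nat_diff[OF le])
  then have c: "int c = int d * (int a + 1) - int a" by (simp add: algebra_simps)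
  have "(g ^^ c) ((g ^^ a) x) = (g ^^ (d * (a+1))) x"
  proof -
    have "c + a = d * (a + 1)" unfolding c_def using le by simp
    then show ?thesis by (metis funpow_add o_apply)
  qed
  also have "\<dots> = x" using pow_mult[OF x] .
  finally have "(g ^^ (c + b)) x = x" using e by (simp add: funpow_add)
  then have "d dvd (c + b)" using pow_self_dvd[OF x] by blast
  then have "int d dvd int (c + b)" by (simp only: of_nat_dvd_iff)
  moreover have "int (c + b) = (int b - int a) + int d * (int a + 1)" using c by simp
  ultimately have "int d dvd (int b - int a) + int d * (int a + 1)" by metis
  moreover have "int d dvd int d * (int a + 1)" by (rule dvd_triv_left)
  ultimately have "int d dvd int b - int a" using dvd_add_left_iff by blast
  then have "int d dvd int a - int b" by (simp add: dvd_diff_commute)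
  then show ?thesis by (simp add: mod_eq_dvd_iff)
qed

definition orb :: "nat \<Rightarrow> nat set" where "orb x = range (\<lambda>k. (g ^^ k) x)"
definition base :: "nat \<Rightarrow> nat" where "base x = Min (orb x)"
definition Q :: "nat \<Rightarrow> nat" where "Q x = (LEAST j. (g ^^ j) x = base x)"
definition P :: "nat \<Rightarrow> int" where "P x = (- int (Q x)) mod int d"

lemma P_range: "0 \<le> P x" "P x < int d"
  unfolding P_def using dpos by auto

lemma orb_fin: "x \<in> {1..n} \<Longrightarrow> finite (orb x)"
proof -
  assume x: "x \<in> {1..n}"
  have "orb x \<subseteq> {1..n}" unfolding orb_def using pow_in[OF x] by blast
  then show ?thesis using finite_subset by blast
qed

lemma orb_g: assumes x: "x \<in> {1..n}" shows "orb (g x) = orb x"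
proof
  show "orb (g x) \<subseteq> orb x"
  proof
    fix y assume "y \<in> orb (g x)"
    then obtain k where y: "y = (g ^^ k) (g x)" unfolding orb_def by auto
    then have "y = (g ^^ Suc k) x" by (simp add: funpow_swap1)
    then show "y \<in> orb x" unfolding orb_def by blast
  qed
  show "orb x \<subseteq> orb (g x)"
  proof
    fix y assume "y \<in> orb x"
    then obtain k where y: "y = (g ^^ k) x" unfolding orb_def by auto
    have "y = (g ^^ (k + d)) x" using y pow_mod[OF x, of k] pow_mod[OF x, of "k+d"] by simp
    also have "\<dots> = (g ^^ Suc (k + d - 1)) x" using dpos by simp
    also have "\<dots> = (g ^^ (k + d - 1)) (g x)" by (simp add: funpow_swap1)
    finally show "y \<in> orb (g x)" unfolding orb_def by auto
  qed
qed

lemma Q_spec: assumes x: "x \<in> {1..n}" shows "(g ^^ Q x) x = base x"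
proof -
  have "base x \<in> orb x" unfolding base_def
    using orb_fin[OF x] by (rule Min_in) (auto simp: orb_def)
  then obtain k where "(g ^^ k) x = base x" unfolding orb_def by auto
  then show ?thesis unfolding Q_def by (rule LeastI)
qed

lemma P_g: assumes x: "x \<in> {1..n}" shows "P (g x) = (P x + 1) mod int d"
proof -
  have gx: "g x \<in> {1..n}" using pow_in[OF x, of 1] by simp
  have "(g ^^ (Q (g x) + 1)) x = (g ^^ Q (g x)) (g x)"
    by (simp add: funpow_swap1)
  also have "\<dots> = base x" using Q_spec[OF gx] orb_g[OF x] by (simp add: base_def)
  also have "\<dots> = (g ^^ Q x) x" using Q_spec[OF x] by simp
  finally have "int (Q (g x) + 1) mod int d = int (Q x) mod int d" using pow_eq[OF x] by blast
  then have "(- int (Q (g x))) mod int d = (- int (Q x) + 1) mod int d"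
  proof -
    have "int d dvd (int (Q (g x)) + 1) - int (Q x)"
    proof (rule mod_eq_dvd_iff[THEN iffD1])
      show "(int (Q (g x)) + 1) mod int d = int (Q x) mod int d"
        using \<open>int (Q (g x) + 1) mod int d = int (Q x) mod int d\<close> by (simp add: add.commute)
    qed
    then have "int d dvd (- int (Q (g x))) - (- int (Q x) + 1)"
    proof -
      have "(- int (Q (g x))) - (- int (Q x) + 1) = - ((int (Q (g x)) + 1) - int (Q x))" by simp
      then show ?thesis using \<open>int d dvd (int (Q (g x)) + 1) - int (Q x)\<close> by (simp only: dvd_minus_iff)
    qed
    then show ?thesis by (simp add: mod_eq_dvd_iff)
  qed
  then show ?thesis unfolding P_def by (simp add: mod_add_left_eq)
qed

lemma P_pow: assumes x: "x \<in> {1..n}" shows "P ((g ^^ k) x) = (P x + int k) mod int d"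
proof (induction k)
  case 0 then show ?case using P_range[of x] by simp
next
  case (Suc k)
  have "P ((g ^^ Suc k) x) = (P ((g ^^ k) x) + 1) mod int d" using P_g[OF pow_in[OF x]] by simp
  also have "\<dots> = ((P x + int k) mod int d + 1) mod int d" using Suc by simp
  also have "\<dots> = (P x + int k + 1) mod int d" by (simp add: mod_add_left_eq)
  also have "\<dots> = (P x + int (Suc k)) mod int d" by (simp add: ac_simps)
  finally show ?case .
qed

lemma P_sh: assumes x: "x \<in> {1..n}" shows "P (sh a x) = (P x + a) mod int d"
proof -
  have "P (sh a x) = (P x + int (nat (a mod int d))) mod int d" unfolding sh_def by (rule P_pow[OF x])
  also have "\<dots> = (P x + a) mod int d" using dpos by (simp add: mod_add_right_eq)
  finally show ?thesis .
qed

end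

context ctx5 begin

lemma L_sub: "(x,y,z) \<in> L \<Longrightarrow> x \<in> {1..n} \<and> y \<in> {1..n} \<and> z \<in> {1..n}"
proof -
  assume a: "(x,y,z) \<in> L"
  have "L \<subseteq> {1..n} \<times> {1..n} \<times> {1..n}" using lat unfolding latin_square_def by (rule conjunct1)
  then show ?thesis using a by blast
qed

lemma L_g: assumes "(x,y,z) \<in> L" shows "(g x, g y, g z) \<in> L"
proof -
  have "(g z, x, y) \<in> L" using clos[OF assms] .
  then have "(g y, g z, x) \<in> L" by (rule clos)
  then show ?thesis by (rule clos)
qed

lemma L_pow: "(x,y,z) \<in> L \<Longrightarrow> ((g ^^ k) x, (g ^^ k) y, (g ^^ k) z) \<in> L"
proof (induction k)
  case 0 then show ?case by simp
next
  case (Suc k) then show ?case using L_g by simp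
qed

lemma L_sh: "(x,y,z) \<in> L \<Longrightarrow> (sh a x, sh a y, sh a z) \<in> L"
  unfolding sh_def by (rule L_pow)

definition psi :: "nat \<times> nat \<times> nat \<Rightarrow> nat \<times> nat \<times> nat" where
  "psi w = (case w of (x,y,z) \<Rightarrow> (sh (- P z) z, sh (- P z - 1) x, sh (- P z - 1) y))"

definition T :: "(nat \<times> nat \<times> nat) set" where "T = {w \<in> L. P (fst w) = 0}"

lemma psi_T: assumes w: "w \<in> T" shows "psi w \<in> T"
proof -
  obtain x y z where wd: "w = (x,y,z)" by (cases w)
  have L: "(x,y,z) \<in> L" using w wd T_def by auto
  have zn: "z \<in> {1..n}" using L_sub[OF L] by auto
  have "(g z, x, y) \<in> L" using clos[OF L] .
  then have "(sh (- P z - 1) (g z), sh (- P z - 1) x, sh (- P z - 1) y) \<in> L" by (rule L_sh)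
  moreover have "sh (- P z - 1) (g z) = sh (- P z) z"
    using sh1[OF zn] sh_add[OF zn, of "- P z - 1" 1] by simp
  ultimately have "psi w \<in> L" unfolding wd psi_def by simp
  moreover have "P (fst (psi w)) = 0" unfolding wd psi_def using P_sh[OF zn] by simp
  ultimately show ?thesis unfolding T_def by simp
qed



lemma T_elim: assumes "w \<in> T"
  obtains x y z where "w = (x,y,z)" "(x,y,z) \<in> L" "P x = 0" "x \<in> {1..n}" "y \<in> {1..n}" "z \<in> {1..n}"
proof -
  obtain x y z where wd: "w = (x,y,z)" by (cases w)
  have L: "(x,y,z) \<in> L" and "P x = 0" using assms wd T_def by auto
  then show ?thesis using that wd L_sub[OF L] by blast
qed

lemma psi_eq: "psi (x,y,z) = (sh (- P z) z, sh (- P z - 1) x, sh (- P z - 1) y)"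
  unfolding psi_def by simp

lemma psi_explicit:
  assumes w: "w = (x,y,z)" and xn: "x \<in> {1..n}" and yn: "y \<in> {1..n}" and zn: "z \<in> {1..n}" and px: "P x = 0"
    and s_def: "s = P z" and u_def: "u = (P y - P z - 1) mod int d"
    and v_def: "v = (- u - s - 2) mod int d"
  shows "psi w = (sh (- s) z, sh (- s - 1) x, sh (- s - 1) y)"
    and "psi (psi w) = (sh (- u + (- s - 1)) y, sh (- u - 1 + - s) z, sh (- u - 1 + (- s - 1)) x)"
    and "psi (psi (psi w)) = (sh (- v + (- u - 1 + (- s - 1))) x, sh (- v - 1 + (- u + (- s - 1))) y, sh (- v - 1 + (- u - 1 + - s)) z)"
proof -
  show 1: "psi w = (sh (- s) z, sh (- s - 1) x, sh (- s - 1) y)" unfolding w psi_eq s_def ..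
  have Pz1: "P (sh (- s - 1) y) = u" unfolding u_def s_def using P_sh[OF yn] by (simp add: algebra_simps)
  have "psi (psi w) = (sh (- u) (sh (- s - 1) y), sh (- u - 1) (sh (- s) z), sh (- u - 1) (sh (- s - 1) x))"
    unfolding 1 psi_eq Pz1 ..
  also have "\<dots> = (sh (- u + (- s - 1)) y, sh (- u - 1 + - s) z, sh (- u - 1 + (- s - 1)) x)"
    by (simp only: sh_add[OF xn] sh_add[OF yn] sh_add[OF zn])
  finally show 2: "psi (psi w) = (sh (- u + (- s - 1)) y, sh (- u - 1 + - s) z, sh (- u - 1 + (- s - 1)) x)" .
  have eqa: "- u - 1 + (- s - 1) = - u - s - 2" by simp
  have Pz2: "P (sh (- u - 1 + (- s - 1)) x) = v" unfolding v_def eqa using P_sh[OF xn] px by simp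
  have "psi (psi (psi w)) = (sh (- v) (sh (- u - 1 + (- s - 1)) x), sh (- v - 1) (sh (- u + (- s - 1)) y), sh (- v - 1) (sh (- u - 1 + - s) z))"
    unfolding 2 psi_eq Pz2 ..
  also have "\<dots> = (sh (- v + (- u - 1 + (- s - 1))) x, sh (- v - 1 + (- u + (- s - 1))) y, sh (- v - 1 + (- u - 1 + - s)) z)"
    by (simp only: sh_add[OF xn] sh_add[OF yn] sh_add[OF zn])
  finally show "psi (psi (psi w)) = (sh (- v + (- u - 1 + (- s - 1))) x, sh (- v - 1 + (- u + (- s - 1))) y, sh (- v - 1 + (- u - 1 + - s)) z)" .
qed

lemma psi3: assumes w: "w \<in> T" shows "psi (psi (psi w)) = w"
proof -
  obtain x y z where wd: "w = (x,y,z)" and xn: "x \<in> {1..n}" and yn: "y \<in> {1..n}" and zn: "z \<in> {1..n}" and px: "P x = 0"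
    using T_elim[OF w] by metis
  define s where "s = P z"
  define u where "u = (P y - P z - 1) mod int d"
  define v where "v = (- u - s - 2) mod int d"
  have E: "(- v - u - s - 2) mod int d = 0"
  proof -
    have "- v - u - s - 2 = (- u - s - 2) - (- u - s - 2) mod int d" unfolding v_def by simp
    also have "\<dots> = int d * ((- u - s - 2) div int d)" by (simp add: minus_mod_eq_mult_div)
    finally show ?thesis by simp
  qed
  have E1: "- v + (- u - 1 + (- s - 1)) = - v - u - s - 2" "- v - 1 + (- u + (- s - 1)) = - v - u - s - 2"
     "- v - 1 + (- u - 1 + - s) = - v - u - s - 2" by simp_all
  show ?thesis using psi_explicit(3)[OF wd xn yn zn px s_def u_def v_def] unfolding E1
    using sh_zero[OF E] wd by simp
qed

lemma psi_nofix: assumes w: "w \<in> T" and d3: "3 dvd d" shows "psi w \<noteq> w"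
proof
  assume eq: "psi w = w"
  obtain x y z where wd: "w = (x,y,z)" and xn: "x \<in> {1..n}" and yn: "y \<in> {1..n}" and zn: "z \<in> {1..n}" and px: "P x = 0"
    using T_elim[OF w] by metis
  have e1: "y = sh (- P z - 1) x" and e2: "z = sh (- P z - 1) y" using eq unfolding wd psi_eq by auto
  have a1: "P y = (- P z - 1) mod int d" using e1 P_sh[OF xn] px by simp
  have "P z = P (sh (- P z - 1) y)" using arg_cong[of z "sh (- P z - 1) y" P, OF e2] .
  also have "\<dots> = (P y + (- P z - 1)) mod int d" by (rule P_sh[OF yn])
  finally have a2: "P z = (P y - P z - 1) mod int d" by (simp add: algebra_simps)
  have r1: "P y mod int d = P y" "P z mod int d = P z" using P_range by simp_all
  have "int d dvd P y - (- P z - 1)" using a1 r1 by (metis mod_eq_dvd_iff mod_mod_trivial)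
  moreover have "int d dvd P z - (P y - P z - 1)" using a2 r1 by (metis mod_eq_dvd_iff mod_mod_trivial)
  ultimately have "int d dvd (P y - (- P z - 1)) + (P z - (P y - P z - 1))" by (rule dvd_add)
  then have "int d dvd 3 * P z + 2" by (simp add: algebra_simps)
  moreover have "(3::int) dvd int d" using int_dvd_int_iff[of 3 d] d3 by simp
  ultimately have "(3::int) dvd 3 * P z + 2" using dvd_trans by blast
  then have "(3::int) dvd 2" by (simp add: dvd_add_right_iff)
  then show False by simp
qed

end


lemma mod3: "((a::int) + b mod d + c mod d) mod d = (a + b + c) mod d"
proof -
  have "((a::int) + b mod d + c mod d) mod d = (a + b mod d + c) mod d" by (rule mod_add_right_eq)
  also have "a + b mod d + c = (a + c) + b mod d" by simp
  also have "((a + c) + b mod d) mod d = (a + c + b) mod d" by (rule mod_add_right_eq)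
  finally show ?thesis by (simp add: ac_simps)
qed
lemma modm: "((a::int) + (b mod d - c)) mod d = (a + (b - c)) mod d"
proof -
  have e: "a + (b mod d - c) = (a - c) + b mod d" by simp
  have "((a::int) + (b mod d - c)) mod d = ((a - c) + b mod d) mod d" by (simp only: e)
  also have "\<dots> = ((a - c) + b) mod d" by (rule mod_add_right_eq)
  also have "(a - c) + b = a + (b - c)" by simp
  finally show ?thesis .
qed
lemma modm2: "((a::int) + (b - c mod d)) mod d = (a + (b - c)) mod d"
proof -
  have e: "a + (b - c mod d) = (a + b) - c mod d" by simp
  have "((a::int) + (b - c mod d)) mod d = ((a + b) - c mod d) mod d" by (simp only: e)
  also have "\<dots> = ((a + b) - c) mod d" by (rule mod_diff_right_eq)
  also have "(a + b) - c = a + (b - c)" by simp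
  finally show ?thesis .
qed
lemma modX: "((X::int) - X mod d + k) mod d = k mod d"
proof -
  have "X - X mod d = d * (X div d)" by (simp add: minus_mod_eq_mult_div)
  then show ?thesis by simp
qed
lemma modh: "((a::int) + (b mod d - c mod d) + (e mod d - f mod d)) mod d = (a + (b - c) + (e - f)) mod d"
proof -
  have 3: "a + (b mod d - c mod d) + (e - f) = (a + (e - f)) + (b mod d - c mod d)" by simp
  have "((a::int) + (b mod d - c mod d) + (e mod d - f mod d)) mod d = ((a + (b mod d - c mod d)) + (e - f)) mod d"
    by (rule trans[OF modm modm2])
  also have "\<dots> = ((a + (e - f)) + (b mod d - c mod d)) mod d" by (simp only: 3)
  also have "\<dots> = ((a + (e - f)) + (b - c)) mod d" by (rule trans[OF modm modm2])
  also have "\<dots> = (a + (b - c) + (e - f)) mod d" by (simp add: ac_simps)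
  finally show ?thesis .
qed

lemma orbit_sum:
  fixes psi :: "'a \<Rightarrow> 'a" and F :: "'a \<Rightarrow> int" and d c :: int
  assumes "finite T" "\<forall>w\<in>T. psi w \<in> T" "\<forall>w\<in>T. psi (psi (psi w)) = w" "\<forall>w\<in>T. psi w \<noteq> w"
    "\<forall>w\<in>T. (F w + F (psi w) + F (psi (psi w))) mod d = c mod d"
  shows "\<exists>m. card T = 3 * m \<and> (sum F T) mod d = (int m * c) mod d"
  using assms
proof (induction "card T" arbitrary: T rule: less_induct)
  case less
  show ?case
  proof (cases "T = {}")
    case True then show ?thesis by (intro exI[of _ 0]) simp
  next
    case False
    then obtain w where w: "w \<in> T" by blast
    let ?O = "{w, psi w, psi (psi w)}"
    have pw: "psi w \<in> T" and ppw: "psi (psi w) \<in> T" using less.prems(2) w by auto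
    have d1: "psi w \<noteq> w" using less.prems(4) w by auto
    have d3: "psi (psi w) \<noteq> psi w" using less.prems(4) pw by auto
    have d2: "psi (psi w) \<noteq> w"
    proof
      assume "psi (psi w) = w"
      then have "psi (psi (psi w)) = psi w" by simp
      then show False using less.prems(3) w d1 by auto
    qed
    have sub: "?O \<subseteq> T" using w pw ppw by auto
    define T' where "T' = T - ?O"
    have cardO: "card ?O = 3" using d1 d2 d3 by auto
    have fin': "finite T'" using less.prems(1) T'_def by auto
    have cardT: "card T = card T' + 3"
      using card_Diff_subset[OF _ sub] less.prems(1) cardO card_mono[OF less.prems(1) sub] unfolding T'_def
      by (metis add.commute finite_subset le_add_diff_inverse sub)
    have closed: "\<forall>v\<in>T'. psi v \<in> T'"
    proof
      fix v assume v: "v \<in> T'"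
      then have vT: "v \<in> T" and vO: "v \<notin> ?O" unfolding T'_def by auto
      have pvT: "psi v \<in> T" using less.prems(2) vT by auto
      have hback: "v = psi (psi (psi v))" using less.prems(3) vT by auto
      have p4: "psi (psi (psi (psi w))) = psi w" using less.prems(3) pw by auto
      have p3: "psi (psi (psi w)) = w" using less.prems(3) w by auto
      have "psi v \<notin> ?O"
      proof
        assume "psi v \<in> ?O"
        then consider "psi v = w" | "psi v = psi w" | "psi v = psi (psi w)" by auto
        then show False
        proof cases
          case 1 then have "v = psi (psi w)" using hback by simp
          then show False using vO by auto
        next
          case 2 then have "v = w" using hback p3 by simp
          then show False using vO by auto
        next
          case 3 then have "v = psi w" using hback p4 by simp
          then show False using vO by auto
        qed
      qed
      then show "psi v \<in> T'" using pvT unfolding T'_def by auto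
    qed
    have "card T' < card T" using cardT by simp
    moreover have "\<forall>w\<in>T'. psi (psi (psi w)) = w" "\<forall>w\<in>T'. psi w \<noteq> w"
      "\<forall>w\<in>T'. (F w + F (psi w) + F (psi (psi w))) mod d = c mod d"
      using less.prems(3-5) unfolding T'_def by auto
    ultimately obtain m' where m': "card T' = 3 * m'" "(sum F T') mod d = (int m' * c) mod d"
      using less.hyps[OF _ fin' closed] by blast
    have "sum F T = sum F (T - ?O) + sum F ?O" by (rule sum.subset_diff[OF sub less.prems(1)])
    then have "sum F T = sum F ?O + sum F T'" unfolding T'_def by simp
    also have "sum F ?O = F w + F (psi w) + F (psi (psi w))" using d1 d2 d3 by simp
    finally have sT: "sum F T = (F w + F (psi w) + F (psi (psi w))) + sum F T'" .
    have "(sum F T) mod d = (c + int m' * c) mod d"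
      unfolding sT using less.prems(5) w m'(2) by (metis mod_add_eq)
    also have "c + int m' * c = int (Suc m') * c" by (simp add: algebra_simps)
    finally show ?thesis using cardT m'(1) by (intro exI[of _ "Suc m'"]) simp
  qed
qed

context ctx5 begin

lemma orbit_y: assumes w: "w \<in> T"
  shows "(P (fst (snd w)) + P (fst (snd (psi w))) + P (fst (snd (psi (psi w))))) mod int d = (-1) mod int d"
proof -
  obtain x y z where wd: "w = (x,y,z)" and xn: "x \<in> {1..n}" and yn: "y \<in> {1..n}" and zn: "z \<in> {1..n}" and px: "P x = 0"
    using T_elim[OF w] by metis
  define s where "s = P z"
  define u where "u = (P y - P z - 1) mod int d"
  define v where "v = (- u - s - 2) mod int d"
  note e = psi_explicit[OF wd xn yn zn px s_def u_def v_def]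
  have "P (fst (snd w)) + P (fst (snd (psi w))) + P (fst (snd (psi (psi w))))
     = P y + (- s - 1) mod int d + (s + (- u - 1 + - s)) mod int d"
    unfolding e(2) unfolding e(1) using wd P_sh[OF xn] P_sh[OF zn] px s_def by simp
  also have "(\<dots>) mod int d = (P y + (- s - 1) + (s + (- u - 1 + - s))) mod int d"
    by (rule mod3)
  also have "P y + (- s - 1) + (s + (- u - 1 + - s)) = (P y - P z - 1) - u + (-1)" using s_def by simp
  also have "((P y - P z - 1) - u + (-1)) mod int d = (-1) mod int d" unfolding u_def by (rule modX)
  finally show ?thesis by simp
qed

lemma orbit_h: assumes w: "w \<in> T"
  shows "((P (snd (snd w)) - P (fst (snd w))) + (P (snd (snd (psi w))) - P (fst (snd (psi w))))
     + (P (snd (snd (psi (psi w)))) - P (fst (snd (psi (psi w)))))) mod int d = (-1) mod int d"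
proof -
  obtain x y z where wd: "w = (x,y,z)" and xn: "x \<in> {1..n}" and yn: "y \<in> {1..n}" and zn: "z \<in> {1..n}" and px: "P x = 0"
    using T_elim[OF w] by metis
  define s where "s = P z"
  define u where "u = (P y - P z - 1) mod int d"
  define v where "v = (- u - s - 2) mod int d"
  note e = psi_explicit[OF wd xn yn zn px s_def u_def v_def]
  have "((P (snd (snd w)) - P (fst (snd w))) + (P (snd (snd (psi w))) - P (fst (snd (psi w))))
     + (P (snd (snd (psi (psi w)))) - P (fst (snd (psi (psi w))))))
     = (s - P y) + ((P y + (- s - 1)) mod int d - (0 + (- s - 1)) mod int d)
       + ((0 + (- u - 1 + (- s - 1))) mod int d - (s + (- u - 1 + - s)) mod int d)"
    unfolding e(2) unfolding e(1) using wd P_sh[OF xn] P_sh[OF yn] P_sh[OF zn] px s_def by simp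
  also have "(\<dots>) mod int d = ((s - P y) + ((P y + (- s - 1)) - (0 + (- s - 1)))
       + ((0 + (- u - 1 + (- s - 1))) - (s + (- u - 1 + - s)))) mod int d"
    by (rule modh)
  also have "(s - P y) + ((P y + (- s - 1)) - (0 + (- s - 1)))
       + ((0 + (- u - 1 + (- s - 1))) - (s + (- u - 1 + - s))) = - 1" by simp
  finally show ?thesis .
qed

end


context ctx5 begin

definition X0 :: "nat set" where "X0 = {x \<in> {1..n}. P x = 0}"
definition R :: "nat \<Rightarrow> (nat \<times> nat) set" where "R x = {(y,z). (x,y,z) \<in> L}"

lemma lat_yz: "\<forall>x\<in>{1..n}. \<forall>y\<in>{1..n}. \<exists>!z. (x, y, z) \<in> L"
  using lat[unfolded latin_square_def, THEN conjunct2, THEN conjunct1] .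
lemma lat_zy: "\<forall>x\<in>{1..n}. \<forall>z\<in>{1..n}. \<exists>!y. (x, y, z) \<in> L"
  using lat[unfolded latin_square_def, THEN conjunct2, THEN conjunct2, THEN conjunct1] .

lemma T_Sigma: "T = Sigma X0 R"
proof
  show "T \<subseteq> Sigma X0 R"
  proof
    fix w assume "w \<in> T"
    then obtain x y z where "w = (x,y,z)" "(x,y,z) \<in> L" "P x = 0" "x \<in> {1..n}" by (rule T_elim)
    then show "w \<in> Sigma X0 R" unfolding X0_def R_def by simp
  qed
  show "Sigma X0 R \<subseteq> T"
  proof
    fix w assume "w \<in> Sigma X0 R"
    then obtain x y z where "w = (x,y,z)" "(x,y,z) \<in> L" "P x = 0" unfolding X0_def R_def by auto
    then show "w \<in> T" unfolding T_def by simp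
  qed
qed

lemma R_sub: "R x \<subseteq> {1..n} \<times> {1..n}"
  unfolding R_def using L_sub by auto

lemma R_fin: "finite (R x)"
  using R_sub finite_subset by blast

lemma X0_fin: "finite X0" unfolding X0_def by simp

lemma T_fin: "finite T" unfolding T_Sigma using X0_fin R_fin by simp

lemma bij_fst: assumes x: "x \<in> {1..n}" shows "bij_betw fst (R x) {1..n}"
  unfolding bij_betw_def
proof
  show "inj_on fst (R x)"
  proof (rule inj_onI)
    fix p q assume p: "p \<in> R x" and q: "q \<in> R x" and e: "fst p = fst q"
    obtain y z where pd: "p = (y,z)" by (cases p)
    obtain y' z' where qd: "q = (y',z')" by (cases q)
    have 1: "(x,y,z) \<in> L" "(x,y,z') \<in> L" using p q e pd qd unfolding R_def by auto
    have "y \<in> {1..n}" using L_sub[OF 1(1)] by simp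
    then have "z = z'" using lat_yz x 1 by blast
    then show "p = q" using pd qd e by simp
  qed
  show "fst ` R x = {1..n}"
  proof
    show "fst ` R x \<subseteq> {1..n}" using R_sub[of x] by (auto simp del: atLeastAtMost_iff)
    show "{1..n} \<subseteq> fst ` R x"
    proof
      fix y assume y: "y \<in> {1..n}"
      then obtain z where "(x,y,z) \<in> L" using lat_yz x by blast
      then have "(y,z) \<in> R x" unfolding R_def by simp
      then show "y \<in> fst ` R x" by force
    qed
  qed
qed

lemma bij_snd: assumes x: "x \<in> {1..n}" shows "bij_betw snd (R x) {1..n}"
  unfolding bij_betw_def
proof
  show "inj_on snd (R x)"
  proof (rule inj_onI)
    fix p q assume p: "p \<in> R x" and q: "q \<in> R x" and e: "snd p = snd q"
    obtain y z where pd: "p = (y,z)" by (cases p)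
    obtain y' z' where qd: "q = (y',z')" by (cases q)
    have 1: "(x,y,z) \<in> L" "(x,y',z) \<in> L" using p q e pd qd unfolding R_def by auto
    have "z \<in> {1..n}" using L_sub[OF 1(1)] by simp
    then have "y = y'" using lat_zy x 1 by blast
    then show "p = q" using pd qd e by simp
  qed
  show "snd ` R x = {1..n}"
  proof
    show "snd ` R x \<subseteq> {1..n}" using R_sub[of x] by (auto simp del: atLeastAtMost_iff)
    show "{1..n} \<subseteq> snd ` R x"
    proof
      fix z assume z: "z \<in> {1..n}"
      then obtain y where "(x,y,z) \<in> L" using lat_zy x by blast
      then have "(y,z) \<in> R x" unfolding R_def by simp
      then show "z \<in> snd ` R x" by force
    qed
  qed
qed

lemma sum_T_y: "(\<Sum>w\<in>T. f (fst (snd w))) = int (card X0) * sum f {1..n}" for f :: "nat \<Rightarrow> int"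
proof -
  have "(\<Sum>w\<in>T. f (fst (snd w))) = (\<Sum>w\<in>Sigma X0 R. (\<lambda>x p. f (fst p)) (fst w) (snd w))"
    unfolding T_Sigma by simp
  also have "\<dots> = (\<Sum>x\<in>X0. \<Sum>p\<in>R x. f (fst p))"
    using sum.Sigma[OF X0_fin, of R "\<lambda>x p. f (fst p)"] R_fin by (simp add: case_prod_unfold)
  also have "\<dots> = (\<Sum>x\<in>X0. sum f {1..n})"
    by (rule sum.cong[OF refl], rule sum.reindex_bij_betw[OF bij_fst]) (simp add: X0_def)
  finally show ?thesis by simp
qed

lemma sum_T_z: "(\<Sum>w\<in>T. f (snd (snd w))) = int (card X0) * sum f {1..n}" for f :: "nat \<Rightarrow> int"
proof -
  have "(\<Sum>w\<in>T. f (snd (snd w))) = (\<Sum>w\<in>Sigma X0 R. (\<lambda>x p. f (snd p)) (fst w) (snd w))"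
    unfolding T_Sigma by simp
  also have "\<dots> = (\<Sum>x\<in>X0. \<Sum>p\<in>R x. f (snd p))"
    using sum.Sigma[OF X0_fin, of R "\<lambda>x p. f (snd p)"] R_fin by (simp add: case_prod_unfold)
  also have "\<dots> = (\<Sum>x\<in>X0. sum f {1..n})"
    by (rule sum.cong[OF refl], rule sum.reindex_bij_betw[OF bij_snd]) (simp add: X0_def)
  finally show ?thesis by simp
qed

lemma card_T: "card T = card X0 * n"
proof -
  have "card T = (\<Sum>x\<in>X0. card (R x))" unfolding T_Sigma using X0_fin R_fin by simp
  also have "\<dots> = (\<Sum>x\<in>X0. n)"
    by (rule sum.cong[OF refl]) (simp add: X0_def bij_betw_same_card[OF bij_fst])
  finally show ?thesis by simp
qed

definition Xj :: "nat \<Rightarrow> nat set" where "Xj j = {x \<in> {1..n}. nat (P x) = j}"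

lemma card_Xj: assumes j: "j < d" shows "card (Xj j) = card X0"
proof -
  have "bij_betw (sh (int j)) X0 (Xj j)"
    unfolding bij_betw_def
  proof
    show "inj_on (sh (int j)) X0"
    proof (rule inj_onI)
      fix a b assume a: "a \<in> X0" and b: "b \<in> X0" and e: "sh (int j) a = sh (int j) b"
      have an: "a \<in> {1..n}" and bn: "b \<in> {1..n}" using a b X0_def by auto
      have "a = sh (- int j) (sh (int j) a)" using sh_add[OF an] sh0 by simp
      also have "\<dots> = sh (- int j) (sh (int j) b)" using e by simp
      also have "\<dots> = b" using sh_add[OF bn] sh0 by simp
      finally show "a = b" .
    qed
    show "sh (int j) ` X0 = Xj j"
    proof
      show "sh (int j) ` X0 \<subseteq> Xj j"
      proof
        fix y assume "y \<in> sh (int j) ` X0"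
        then obtain a where a: "a \<in> X0" and y: "y = sh (int j) a" by auto
        have an: "a \<in> {1..n}" and pa: "P a = 0" using a X0_def by auto
        have "P y = int j" using P_sh[OF an, of "int j"] pa j y by simp
        then show "y \<in> Xj j" unfolding Xj_def using sh_in[OF an] y by simp
      qed
      show "Xj j \<subseteq> sh (int j) ` X0"
      proof
        fix y assume y: "y \<in> Xj j"
        then have yn: "y \<in> {1..n}" and py: "P y = int j" unfolding Xj_def using P_range[of y] by auto
        define a where "a = sh (- int j) y"
        have "P a = 0" unfolding a_def using P_sh[OF yn] py by simp
        moreover have "a \<in> {1..n}" unfolding a_def using sh_in[OF yn] .
        moreover have "sh (int j) a = y" unfolding a_def using sh_add[OF yn] sh0 by simp
        ultimately show "y \<in> sh (int j) ` X0" unfolding X0_def by force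
      qed
    qed
  qed
  then show ?thesis by (simp add: bij_betw_same_card)
qed

lemma n_eq: "n = d * card X0"
proof -
  have "(\<Sum>j\<in>{..<d}. sum (\<lambda>_. 1::nat) {x \<in> {1..n}. nat (P x) = j}) = sum (\<lambda>_. 1::nat) {1..n}"
    by (rule sum.group) (auto simp: P_range nat_less_iff)
  then have "(\<Sum>j\<in>{..<d}. card (Xj j)) = n" unfolding Xj_def by simp
  moreover have "(\<Sum>j\<in>{..<d}. card (Xj j)) = (\<Sum>j\<in>{..<d}. card X0)"
    by (rule sum.cong[OF refl]) (simp add: card_Xj)
  ultimately show ?thesis by simp
qed

lemma sumP: "sum P {1..n} = int (card X0) * (\<Sum>j<d. int j)"
proof -
  have "(\<Sum>j\<in>{..<d}. sum P {x \<in> {1..n}. nat (P x) = j}) = sum P {1..n}"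
    by (rule sum.group) (auto simp: P_range nat_less_iff)
  moreover have "sum P {x \<in> {1..n}. nat (P x) = j} = int j * int (card X0)" if j: "j < d" for j
  proof -
    have "sum P (Xj j) = sum (\<lambda>_. int j) (Xj j)"
      by (rule sum.cong[OF refl]) (auto simp: Xj_def P_range)
    then show ?thesis using card_Xj[OF j] unfolding Xj_def by simp
  qed
  ultimately have "sum P {1..n} = (\<Sum>j\<in>{..<d}. int j * int (card X0))" by simp
  then show ?thesis by (simp add: sum_distrib_right mult.commute)
qed

lemma gauss2: "2 * (\<Sum>j<k. int j) = int k * (int k - 1)"
  by (induction k) (simp_all add: algebra_simps)

end


lemma three_dvd_sq: "(3::nat) dvd r * r \<Longrightarrow> 3 dvd r"
proof -
  assume h: "(3::nat) dvd r * r"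
  have "(r * r) mod 3 = ((r mod 3) * (r mod 3)) mod 3" by (simp add: mod_mult_eq)
  moreover have "r mod 3 = 0 \<or> r mod 3 = 1 \<or> r mod 3 = 2" by arith
  moreover have "(r * r) mod 3 = 0" using h by simp
  ultimately have "r mod 3 = 0" by auto
  then show ?thesis by (simp add: dvd_eq_mod_eq_0)
qed

context ctx5 begin

lemma main: assumes d3: "3 dvd d" and nr: "n = d * r"
  shows "3 dvd r \<and> (2 dvd d \<longrightarrow> 2 dvd r)"
proof -
  define Fy where "Fy = (\<lambda>w::nat\<times>nat\<times>nat. P (fst (snd w)))"
  define Fz where "Fz = (\<lambda>w::nat\<times>nat\<times>nat. P (snd (snd w)))"
  define Fh where "Fh = (\<lambda>w. Fz w - Fy w)"
  have cl: "\<forall>w\<in>T. psi w \<in> T" using psi_T by blast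
  have p3: "\<forall>w\<in>T. psi (psi (psi w)) = w" using psi3 by blast
  have nf: "\<forall>w\<in>T. psi w \<noteq> w" using psi_nofix d3 by blast
  have oy: "\<forall>w\<in>T. (Fy w + Fy (psi w) + Fy (psi (psi w))) mod int d = (-1) mod int d"
    using orbit_y unfolding Fy_def by blast
  have oh: "\<forall>w\<in>T. (Fh w + Fh (psi w) + Fh (psi (psi w))) mod int d = (-1) mod int d"
    using orbit_h unfolding Fh_def Fy_def Fz_def by blast
  obtain m1 where m1: "card T = 3 * m1" "(sum Fy T) mod int d = (int m1 * (-1)) mod int d"
    using orbit_sum[OF T_fin cl p3 nf oy] by blast
  obtain m2 where m2: "card T = 3 * m2" "(sum Fh T) mod int d = (int m2 * (-1)) mod int d"
    using orbit_sum[OF T_fin cl p3 nf oh] by blast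
  have "m1 = m2" using m1(1) m2(1) by simp
  have "sum Fh T = sum Fz T - sum Fy T" unfolding Fh_def by (simp add: sum_subtractf)
  also have "\<dots> = 0" unfolding Fz_def Fy_def using sum_T_y[of P] sum_T_z[of P] by simp
  finally have "(- int m2) mod int d = 0" using m2(2) by simp
  then have dm: "int d dvd int m2" by (simp add: dvd_eq_mod_eq_0 [symmetric])
  then have dm': "d dvd m2" by simp
  have c0: "card X0 = r" using n_eq nr dpos by simp
  have cT: "card T = r * (d * r)" using card_T c0 nr by simp
  obtain k where k: "m2 = d * k" using dm' by blast
  have "3 * (d * k) = d * (r * r)" using cT m2(1) k by (simp add: algebra_simps)
  then have "3 * k = r * r" using dpos by (simp add: algebra_simps)
  then have r3: "3 dvd r" using three_dvd_sq by (metis dvd_triv_left)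
  have r2: "2 dvd r" if d2: "2 dvd d"
  proof -
    define S where "S = (\<Sum>j<d. int j)"
    have "sum Fy T = int r * (int r * S)" unfolding Fy_def S_def using sum_T_y[of P] sumP c0 by simp
    moreover have "(sum Fy T) mod int d = 0" using m1(2) \<open>m1 = m2\<close> dm by (simp add: dvd_eq_mod_eq_0 [symmetric])
    ultimately have "int d dvd int r * int r * S" by (simp add: dvd_eq_mod_eq_0 mult.assoc)
    then have "2 * int d dvd int r * int r * (2 * S)" by (metis mult_dvd_mono dvd_refl mult.commute mult.left_commute)
    then have "int d * 2 dvd int d * (int r * int r * (int d - 1))" using gauss2[of d] unfolding S_def
      by (simp add: algebra_simps)
    then have "2 dvd int r * int r * (int d - 1)" using dpos by (subst (asm) dvd_mult_cancel_left) simp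
    moreover have "odd (int d - 1)" using d2 by simp
    ultimately have "even (int r * int r)" by (simp add: even_mult_iff)
    then show "2 dvd r" by (simp add: even_mult_iff)
  qed
  show ?thesis using r3 r2 by blast
qed

end

lemma six: "(3::nat) dvd r \<Longrightarrow> 2 dvd r \<Longrightarrow> 6 dvd r"
proof -
  assume a: "(3::nat) dvd r" and b: "2 dvd r"
  then obtain a' where r: "r = 3 * a'" by blast
  then have "even a'" using b by (simp add: even_mult_iff)
  then obtain b' where "a' = 2 * b'" by blast
  then show ?thesis using r by simp
qed

theorem theorem5p2:
  fixes d r n :: nat and \<gamma> :: "nat \<Rightarrow> nat"
  assumes "0 < d" and "0 < r" and "n = d * r"
    and "cycle_structure n \<gamma> d r"
    and "in_Par_123 n id id \<gamma>"
  shows "(3 dvd d \<longrightarrow> 3 dvd r) \<and> (6 dvd d \<longrightarrow> 6 dvd r)"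
proof -
  have perm: "\<gamma> permutes {1..n}" and clen: "\<forall>x\<in>{1..n}. cycle_len \<gamma> x = d"
    using assms(4) unfolding cycle_structure_def by auto
  obtain L where lat: "latin_square n L" and hfix: "para_123 id id \<gamma> L = L"
    using assms(5) unfolding in_Par_123_def by blast
  have clos: "(\<gamma> z, x, y) \<in> L" if "(x,y,z) \<in> L" for x y z
  proof -
    have "(\<gamma> z, id x, id y) \<in> para_123 id id \<gamma> L" unfolding para_123_def using that by blast
    then show ?thesis using hfix by simp
  qed
  interpret ctx5 n d \<gamma> L
    using perm assms(1) clen lat clos by unfold_locales auto
  have A: "3 dvd d \<longrightarrow> 3 dvd r" using main assms(3) by blast
  have B: "6 dvd d \<longrightarrow> 6 dvd r"
  proof
    assume "6 dvd d"
    then have "3 dvd d" "2 dvd d" by (auto intro: dvd_trans[of _ 6])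
    then show "6 dvd r" using main assms(3) six by blast
  qed
  show ?thesis using A B by blast
qed


end
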